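(* Let $d\ge2$, $w>0$ and $v\ge0$. For unit vectors $\boldsymbol{u}_1,\dots,\boldsymbol{u}_d\in\mathbb{R}^d$ (random vectors $\boldsymbol{w}_i=w\boldsymbol{u}_i$ all having the same length $w$) define $$\rho(\boldsymbol{u}_1,\dots,\boldsymbol{u}_d)=\frac{\Gamma(\frac d2)}{d(d-1)}\sum_{i=1}^d\sum_{j\ne i}\sum_{k=0}^\infty\frac{v^{2k}w^{2k}\|\boldsymbol{u}_i+\boldsymbol{u}_j\|_2^{2k}}{2^{2k}k!\,\Gamma(k+\frac d2)}.$$ Then $\rho$ (and its expectation, if the directions $\boldsymbol{u}_i$ are chosen randomly) is minimised when the ensemble has simplex geometry, i.e. when $\boldsymbol{u}_i^\top\boldsymbol{u}_j=-\frac{1}{d-1}$ for all $i\ne j$ (equivalently, all pairs subtend equal angles and $\sum_i\boldsymbol{u}_i=0$).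
   Context: This is the RF-conformity $\rho(\boldsymbol{x},\boldsymbol{y})$ of an ensemble of $d$ random vectors of common norm $w$, where $v=\|\boldsymbol{x}+\boldsymbol{y}\|_2$. *)

theory Defs
  imports "HOL-Analysis.Analysis"
begin

definition rf_conformity :: "nat \<Rightarrow> real \<Rightarrow> real \<Rightarrow> (nat \<Rightarrow> real ^ 'n) \<Rightarrow> real" where
  "rf_conformity d v w u =
     Gamma (real d / 2) / (real d * (real d - 1)) *
     (\<Sum>i<d. \<Sum>j\<in>{..<d} - {i}.
        (\<Sum>k. v ^ (2*k) * w ^ (2*k) * norm (u i + u j) ^ (2*k) /
              (2 ^ (2*k) * fact k * Gamma (real k + real d / 2))))"

definition simplex_ensemble :: "nat \<Rightarrow> (nat \<Rightarrow> real ^ 'n) \<Rightarrow> bool" where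
  "simplex_ensemble d s \<longleftrightarrow>
     (\<forall>i<d. norm (s i) = 1) \<and>
     (\<forall>i<d. \<forall>j<d. i \<noteq> j \<longrightarrow> s i \<bullet> s j = - 1 / (real d - 1))"

end

theory Submission
  imports Defs
begin

lemma convex_pow_nonneg: "convex_on {0::real..} (\<lambda>x. x^n)"
proof (cases "even n")
  case True thus ?thesis using convex_power_even convex_on_subset by blast
next
  case False thus ?thesis using convex_power_odd by blast
qed

lemma jensen_pow:
  fixes P :: "'a set" and T :: "'a \<Rightarrow> real"
  assumes "finite P" "P \<noteq> {}" "\<And>p. p \<in> P \<Longrightarrow> T p \<ge> 0" "t0 \<ge> 0"
    and "real (card P) * t0 \<le> (\<Sum>p\<in>P. T p)"
  shows "real (card P) * t0 ^ k \<le> (\<Sum>p\<in>P. T p ^ k)"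
proof -
  define N where "N = real (card P)"
  have N: "N > 0" using assms by (simp add: N_def card_gt_0_iff)
  have "(\<Sum>p\<in>P. (1/N) *\<^sub>R T p) ^ k \<le> (\<Sum>p\<in>P. (1/N) * T p ^ k)"
    by (rule convex_on_sum[OF assms(1,2) convex_pow_nonneg]) (use N assms in \<open>auto simp: N_def\<close>)
  moreover have "t0 \<le> (\<Sum>p\<in>P. (1/N) *\<^sub>R T p)"
  proof -
    have "(\<Sum>p\<in>P. (1/N) *\<^sub>R T p) = (\<Sum>p\<in>P. T p) / N"
      by (simp add: sum_divide_distrib)
    thus ?thesis using assms(5) N by (simp add: N_def pos_le_divide_eq mult.commute del: sum_divide_distrib)
  qed
  hence "t0 ^ k \<le> (\<Sum>p\<in>P. (1/N) *\<^sub>R T p) ^ k" using assms(4) power_mono by blast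
  ultimately have "t0 ^ k \<le> (1/N) * (\<Sum>p\<in>P. T p ^ k)"
    by (simp add: sum_distrib_left)
  thus ?thesis using N by (simp add: N_def field_simps)
qed

lemma series_ineq:
  fixes P :: "'a set" and T :: "'a \<Rightarrow> real" and g :: "nat \<Rightarrow> real"
  assumes "finite P" "P \<noteq> {}" "\<And>p. p \<in> P \<Longrightarrow> T p \<ge> 0" "t0 \<ge> 0"
    and "real (card P) * t0 \<le> (\<Sum>p\<in>P. T p)"
    and "\<And>k. g k \<ge> 0" and "\<And>x. x \<ge> 0 \<Longrightarrow> summable (\<lambda>k. g k * x ^ k)"
  shows "real (card P) * (\<Sum>k. g k * t0 ^ k) \<le> (\<Sum>p\<in>P. \<Sum>k. g k * T p ^ k)"
proof -
  have "real (card P) * (\<Sum>k. g k * t0 ^ k) = (\<Sum>k. real (card P) * (g k * t0 ^ k))"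
    using assms(4,7) by (simp add: suminf_mult)
  also have "\<dots> \<le> (\<Sum>k. \<Sum>p\<in>P. g k * T p ^ k)"
  proof (rule suminf_le)
    show "real (card P) * (g k * t0 ^ k) \<le> (\<Sum>p\<in>P. g k * T p ^ k)" for k
      using jensen_pow[OF assms(1-5), of k] assms(6)[of k]
      by (simp add: sum_distrib_left[symmetric] mult_left_mono mult.left_commute)
    show "summable (\<lambda>k. real (card P) * (g k * t0 ^ k))"
      using assms(4,7) summable_mult by blast
    show "summable (\<lambda>k. \<Sum>p\<in>P. g k * T p ^ k)"
      by (rule summable_sum) (use assms(3,7) in auto)
  qed
  also have "\<dots> = (\<Sum>p\<in>P. \<Sum>k. g k * T p ^ k)"
    by (rule suminf_sum) (use assms(3,7) in auto)
  finally show ?thesis .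
qed

lemma Gamma_ge_shift:
  fixes a :: real assumes "a \<ge> 1"
  shows "Gamma a \<le> Gamma (a + real k)"
proof -
  have na: "a \<notin> \<int>\<^sub>\<le>\<^sub>0" using assms
    using nonpos_Ints_nonpos[of a] by linarith
  have "pochhammer a k \<ge> 1"
    unfolding pochhammer_prod using assms by (intro prod_ge_1) auto
  moreover have "pochhammer a k = Gamma (a + real k) / Gamma a"
    using pochhammer_Gamma[OF na] by simp
  moreover have "Gamma a > 0" using assms by simp
  ultimately show ?thesis by (simp add: field_simps)
qed

lemma summ:
  fixes a v w x :: real assumes "a \<ge> 1" "x \<ge> 0"
  shows "summable (\<lambda>k. v ^ (2*k) * w ^ (2*k) / (2 ^ (2*k) * fact k * Gamma (real k + a)) * x ^ k)"
proof -
  define y where "y = (v * w / 2) ^ 2 * x"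
  have y: "y \<ge> 0" using assms by (simp add: y_def)
  have ga: "Gamma a > 0" using assms by simp
  have eq: "v ^ (2*k) * w ^ (2*k) / (2 ^ (2*k) * fact k * Gamma (real k + a)) * x ^ k
       = y ^ k / (fact k * Gamma (real k + a))" for k
    by (simp add: y_def power_mult power_mult_distrib power_divide)
  show ?thesis unfolding eq
  proof (rule summable_comparison_test')
    show "summable (\<lambda>k. inverse (Gamma a) * (inverse (fact k) * y ^ k))"
      by (rule summable_mult[OF summable_exp])
    fix k :: nat
    have g: "Gamma a \<le> Gamma (real k + a)" using Gamma_ge_shift[OF assms(1), of k] by (simp add: add.commute)
    have "y ^ k / (fact k * Gamma (real k + a)) \<le> y ^ k / (fact k * Gamma a)"
      using y ga g by (intro divide_left_mono mult_left_mono) auto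
    moreover have "Gamma (real k + a) > 0" using assms(1) by simp
    then have "norm (y ^ k / (fact k * Gamma (real k + a))) = y ^ k / (fact k * Gamma (real k + a))"
      using y by simp
    moreover have "y ^ k / (fact k * Gamma a) = inverse (Gamma a) * (inverse (fact k) * y ^ k)"
      by (simp add: divide_inverse mult_ac)
    ultimately show "norm (y ^ k / (fact k * Gamma (real k + a))) \<le> inverse (Gamma a) * (inverse (fact k) * y ^ k)"
      by simp
  qed
qed

theorem lemmaA1:
  fixes u s :: "nat \<Rightarrow> real ^ 'n" and v w :: real
  assumes "CARD('n) \<ge> 2" and "w > 0" and "v \<ge> 0"
    and "\<forall>i<CARD('n). norm (u i) = 1"
    and "simplex_ensemble CARD('n) s"
  shows "rf_conformity CARD('n) v w s \<le> rf_conformity CARD('n) v w u"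
proof -
  define d where "d = CARD('n)"
  have d2: "d \<ge> 2" using assms(1) by (simp add: d_def)
  define g where "g k = v ^ (2*k) * w ^ (2*k) / (2 ^ (2*k) * fact k * Gamma (real k + real d / 2))" for k
  define F where "F t = (\<Sum>k. g k * t ^ k)" for t :: real
  define P where "P = Sigma {..<d} (\<lambda>i. {..<d} - {i})"
  define C where "C = Gamma (real d / 2) / (real d * (real d - 1))"
  define t0 where "t0 = 2 - 2 / (real d - 1)"
  have C: "C \<ge> 0" using d2 unfolding C_def by (intro divide_nonneg_pos) auto
  have rf: "rf_conformity d v w x = C * (\<Sum>p\<in>P. F (norm (x (fst p) + x (snd p)) ^ 2))" for x :: "nat \<Rightarrow> real ^ 'n"
  proof -
    have tm: "v ^ (2*k) * w ^ (2*k) * norm (x i + x j) ^ (2*k) / (2 ^ (2*k) * fact k * Gamma (real k + real d / 2))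
       = g k * (norm (x i + x j) ^ 2) ^ k" for i j k
      by (simp add: g_def power_mult[symmetric] mult.commute)
    have "(\<Sum>p\<in>P. F (norm (x (fst p) + x (snd p)) ^ 2)) = (\<Sum>i<d. \<Sum>j\<in>{..<d} - {i}. F (norm (x i + x j) ^ 2))"
      unfolding P_def by (simp add: sum.Sigma split_def)
    also have "\<dots> = (\<Sum>i<d. \<Sum>j\<in>{..<d} - {i}.
        (\<Sum>k. v ^ (2*k) * w ^ (2*k) * norm (x i + x j) ^ (2*k) /
              (2 ^ (2*k) * fact k * Gamma (real k + real d / 2))))"
      unfolding tm F_def ..
    finally show ?thesis unfolding rf_conformity_def C_def by simp
  qed
  have finP: "finite P" unfolding P_def by auto
  have cardP: "card P = d * (d - 1)"
    unfolding P_def by (simp add: card_Diff_singleton)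
  have Pne: "P \<noteq> {}" using d2 finP cardP by (intro notI) simp
  have t0: "t0 \<ge> 0" using d2 unfolding t0_def by (simp add: field_simps)
  have gnn: "g k \<ge> 0" for k unfolding g_def using assms(2,3) d2 by (intro divide_nonneg_pos) auto
  have gs: "summable (\<lambda>k. g k * x ^ k)" if "x \<ge> 0" for x
    unfolding g_def using summ[of "real d / 2" x v w] d2 that by (simp add: add.commute)
  have nsq: "norm (a + b) ^ 2 = norm a ^ 2 + 2 * (a \<bullet> b) + norm b ^ 2" for a b :: "real ^ 'n"
    by (simp add: power2_norm_eq_inner inner_add inner_commute)
  have ss: "(\<Sum>p\<in>P. F (norm (s (fst p) + s (snd p)) ^ 2)) = real (card P) * F t0"
  proof -
    have "(\<Sum>p\<in>P. F (norm (s (fst p) + s (snd p)) ^ 2)) = (\<Sum>p\<in>P. F t0)"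
    proof (rule sum.cong)
      fix p assume "p \<in> P"
      then have "fst p < d" "snd p < d" "fst p \<noteq> snd p" unfolding P_def by auto
      then show "F (norm (s (fst p) + s (snd p)) ^ 2) = F t0"
        using assms(5) unfolding simplex_ensemble_def d_def[symmetric] t0_def nsq by simp
    qed simp
    thus ?thesis by simp
  qed
  define S where "S = (\<Sum>j<d. u j)"
  have inner_sum: "(\<Sum>j\<in>{..<d} - {i}. u i \<bullet> u j) = u i \<bullet> S - 1" if "i < d" for i
  proof -
    have "u i \<bullet> S = (\<Sum>j<d. u i \<bullet> u j)" unfolding S_def by (simp add: inner_sum_right)
    also have "\<dots> = u i \<bullet> u i + (\<Sum>j\<in>{..<d} - {i}. u i \<bullet> u j)"
      using that by (subst sum.remove[of _ i]) auto
    also have "u i \<bullet> u i = 1" using assms(4) that by (simp add: d_def power2_norm_eq_inner[symmetric])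
    finally show ?thesis by simp
  qed
  have row: "(\<Sum>j\<in>{..<d} - {i}. norm (u i + u j) ^ 2) = 2 * (real d - 1) + 2 * (u i \<bullet> S - 1)"
    if "i < d" for i
  proof -
    have "(\<Sum>j\<in>{..<d} - {i}. norm (u i + u j) ^ 2) = (\<Sum>j\<in>{..<d} - {i}. 2 + 2 * (u i \<bullet> u j))"
      using assms(4) that by (intro sum.cong) (auto simp: nsq d_def)
    also have "\<dots> = 2 * real (d - 1) + 2 * (\<Sum>j\<in>{..<d} - {i}. u i \<bullet> u j)"
      using that by (simp add: sum.distrib sum_distrib_left)
    finally show ?thesis using inner_sum[OF that] d2 by (simp add: of_nat_diff)
  qed
  have sumT: "(\<Sum>p\<in>P. norm (u (fst p) + u (snd p)) ^ 2) = 2 * real d * (real d - 1) + 2 * (S \<bullet> S) - 2 * real d"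
  proof -
    have "(\<Sum>p\<in>P. norm (u (fst p) + u (snd p)) ^ 2) = (\<Sum>i<d. \<Sum>j\<in>{..<d} - {i}. norm (u i + u j) ^ 2)"
      unfolding P_def by (simp add: sum.Sigma split_def)
    also have "\<dots> = (\<Sum>i<d. 2 * (real d - 1) + 2 * (u i \<bullet> S - 1))"
      by (intro sum.cong) (auto simp: row)
    also have "\<dots> = 2 * real d * (real d - 1) + 2 * (S \<bullet> S) - 2 * real d"
      by (simp add: sum.distrib sum_subtractf sum_distrib_left S_def inner_sum_left algebra_simps)
    finally show ?thesis .
  qed
  have SS: "S \<bullet> S \<ge> 0" by simp
  have le: "real (card P) * t0 \<le> (\<Sum>p\<in>P. norm (u (fst p) + u (snd p)) ^ 2)"
  proof -
    have "real (card P) * t0 = 2 * real d * (real d - 1) - 2 * real d"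
      using d2 unfolding cardP t0_def by (simp add: of_nat_diff field_simps)
    thus ?thesis using sumT SS by linarith
  qed
  have main: "real (card P) * F t0 \<le> (\<Sum>p\<in>P. F (norm (u (fst p) + u (snd p)) ^ 2))"
    unfolding F_def by (rule series_ineq[OF finP Pne _ t0 le gnn gs]) auto
  show ?thesis
    unfolding d_def[symmetric] rf ss using main C by (simp add: mult_left_mono)
qed

end
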